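(* Consider problem (rank-MOA) $\min\{f(X):\mathcal{A}(X)=b,\ \operatorname{rank}(X)\le r\}$ and let $X\in\mathcal{L}\cap\mathcal{M}(r)$ with $s=\operatorname{rank}(X)$ and SVD $X=U\Sigma V^\top$ as in the context. (i) If $X$ is a local minimizer and Assumption 1 holds at $X$, then $X$ is an $M$-stationary point. (ii) If $f$ is convex and $X$ is an $M$-stationary point, then $f(X)\le f(Y)$ for all $Y\in\mathcal{L}\cap\mathcal{M}_X(\Gamma)$, where $\mathcal{M}_X(\Gamma)=\{UBV_\Gamma^\top:B\in\mathbb{R}^{m\times s}\}$.
   Context: $0\le r<n\le m$. $\langle X,Y\rangle=\sum_{i,j}X_{ij}Y_{ij}$. $f:\mathbb{R}^{m\times n}\to\mathbb{R}$ continuously differentiable; $A^1,\dots,A^l\in\mathbb{R}^{m\times n}$, $b\in\mathbb{R}^l$, $\mathcal{A}(X)=(\langle A^1,X\rangle,\dots,\langle A^l,X\rangle)^\top$, $\mathcal{L}=\{X:\mathcal{A}(X)=b\}$, $\mathcal{M}(r)=\{X:\operatorname{rank}X\le r\}$. Lagrangian $L(X;y)=f(X)+\sum_{i=1}^ly_i(\langle A^i,X\rangle-b_i)$. For closed $\Omega$, $X\in\Omega$: $\mathrm{T}^B_\Omega(X)$ is the set of $\Xi$ with $X^k\in\Omega$, $X^k\to X$, $t_k\downarrow0$, $(X^k-X)/t_k\to\Xi$; $\mathrm{N}^F_\Omega(X)=\{Y:\langle Y,\Xi\rangle\le0\ \forall\Xi\in\mathrm{T}^B_\Omega(X)\}$;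 the Mordukhovich normal cone $\mathrm{N}^M_\Omega(X)$ is the set of limits of sequences $W^k\in\mathrm{N}^F_\Omega(X^k)$ with $X^k\in\Omega$, $X^k\to X$. $X$ is an $M$-stationary point of (rank-MOA) if $\mathcal{A}(X)=b$, $X\in\mathcal{M}(r)$ and there is $y\in\mathbb{R}^l$ with $-\nabla_XL(X;y)\in\mathrm{N}^M_{\mathcal{M}(r)}(X)$ (for $X$ of rank $s$ this cone equals $\{U_{\Gamma_m^\perp}DV_{\Gamma_n^\perp}^\top: D\in\mathbb{R}^{(m-s)\times(n-s)},\ \operatorname{rank}D\le n-r\}$). SVD convention: $X=U\Sigma V^\top$, $U$, $V$ orthogonal of sizes $m$, $n$, $\Sigma$ with diagonal $\sigma_1\ge\dots\ge\sigma_s>0$ followed by zeros, $\Gamma=\{1,\dots,s\}$, $\Gamma_m^\perp=\{s+1,\dots,m\}$, $\Gamma_n^\perp=\{s+1,\dots,n\}$, $U_J,V_J$ column submatrices indexed by $J$. $T^i_X=\begin{bmatrix}U_\Gamma^\top A^iV_\Gamma & U_\Gamma^\top A^iV_{\Gamma_n^\perp}\\ U_{\Gamma_m^\perp}^\top A^iV_\Gamma & O\end{bmatrix}$; Assumption 1 at $X$: $T^1_X,\dots,T^l_X$ linearly independent. *)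

theory Defs
  imports "HOL-Analysis.Analysis"
begin

text \<open>Position (0-based) of an index in a finite linearly ordered index type;
  index k of the paper corresponds to position k-1.\<close>
definition pos :: "'a::{finite,linorder} \<Rightarrow> nat" where
  "pos i = card {k. k < i}"

definition bouligand_tangent :: "'a::real_normed_vector set \<Rightarrow> 'a \<Rightarrow> 'a set" where
  "bouligand_tangent \<Omega> X = {\<Xi>. \<exists>Xs t. (\<forall>k. Xs k \<in> \<Omega>) \<and> Xs \<longlonglongrightarrow> X \<and>
      (\<forall>k. t k > 0) \<and> t \<longlonglongrightarrow> 0 \<and> (\<lambda>k. (Xs k - X) /\<^sub>R t k) \<longlonglongrightarrow> \<Xi>}"

definition frechet_normal :: "'a::real_inner set \<Rightarrow> 'a \<Rightarrow> 'a set" where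
  "frechet_normal \<Omega> X = {Y. \<forall>\<Xi>\<in>bouligand_tangent \<Omega> X. Y \<bullet> \<Xi> \<le> 0}"

definition mordukhovich_normal :: "'a::real_inner set \<Rightarrow> 'a \<Rightarrow> 'a set" where
  "mordukhovich_normal \<Omega> X = {W. \<exists>Xs Ws. (\<forall>k. Xs k \<in> \<Omega>) \<and> Xs \<longlonglongrightarrow> X \<and>
      (\<forall>k. Ws k \<in> frechet_normal \<Omega> (Xs k)) \<and> Ws \<longlonglongrightarrow> W}"

definition rank_set :: "nat \<Rightarrow> (real^'n^'m) set" where
  "rank_set r = {X. rank X \<le> r}"

text \<open>Affine set L = {X. A(X) = b}, constraints indexed by i < l.
  The Frobenius inner product on real^'n^'m is the inner product \<bullet>.\<close>
definition affine_set :: "nat \<Rightarrow> (nat \<Rightarrow> real^'n^'m) \<Rightarrow> (nat \<Rightarrow> real) \<Rightarrow> (real^'n^'m) set" where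
  "affine_set l A b = {X. \<forall>i<l. A i \<bullet> X = b i}"

definition lagrangian_grad ::
  "(real^'n^'m \<Rightarrow> real^'n^'m) \<Rightarrow> nat \<Rightarrow> (nat \<Rightarrow> real^'n^'m) \<Rightarrow> real^'n^'m \<Rightarrow> (nat \<Rightarrow> real) \<Rightarrow> real^'n^'m" where
  "lagrangian_grad gradf l A X y = gradf X + (\<Sum>i<l. y i *\<^sub>R A i)"

definition M_stationary ::
  "(real^'n^'m \<Rightarrow> real^'n^'m) \<Rightarrow> nat \<Rightarrow> (nat \<Rightarrow> real^'n^'m) \<Rightarrow> (nat \<Rightarrow> real) \<Rightarrow> nat \<Rightarrow> real^'n^'m \<Rightarrow> bool" where
  "M_stationary gradf l A b r X \<longleftrightarrow> X \<in> affine_set l A b \<and> X \<in> rank_set r \<and>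
     (\<exists>y. - lagrangian_grad gradf l A X y \<in> mordukhovich_normal (rank_set r) X)"

definition local_minimizer ::
  "(real^'n^'m \<Rightarrow> real) \<Rightarrow> nat \<Rightarrow> (nat \<Rightarrow> real^'n^'m) \<Rightarrow> (nat \<Rightarrow> real) \<Rightarrow> nat \<Rightarrow> real^'n^'m \<Rightarrow> bool" where
  "local_minimizer f l A b r X \<longleftrightarrow> X \<in> affine_set l A b \<inter> rank_set r \<and>
     (\<exists>\<epsilon>>0. \<forall>Y\<in>affine_set l A b \<inter> rank_set r. dist Y X < \<epsilon> \<longrightarrow> f X \<le> f Y)"

definition is_svd :: "real^'n::{finite,linorder}^'m::{finite,linorder} \<Rightarrow> nat \<Rightarrow> real^'m::{finite,linorder}^'m::{finite,linorder} \<Rightarrow> (nat \<Rightarrow> real)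
   \<Rightarrow> real^'n::{finite,linorder}^'n::{finite,linorder} \<Rightarrow> bool" where
  "is_svd X s U \<sigma> V \<longleftrightarrow> orthogonal_matrix U \<and> orthogonal_matrix V \<and>
     (\<forall>k<s. \<sigma> k > 0) \<and> (\<forall>j k. j \<le> k \<and> k < s \<longrightarrow> \<sigma> k \<le> \<sigma> j) \<and>
     X = U ** (\<chi> i j. if pos i = pos j \<and> pos i < s then \<sigma> (pos i) else 0) ** transpose V"

text \<open>T^i_X written as an m\<times>n matrix: the blocks of U^T A^i V with the
  (\<Gamma>_m^\<perp>,\<Gamma>_n^\<perp>) block replaced by O.\<close>
definition T_mat :: "nat \<Rightarrow> real^'m::{finite,linorder}^'m::{finite,linorder} \<Rightarrow> real^'n::{finite,linorder}^'n::{finite,linorder}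
    \<Rightarrow> real^'n::{finite,linorder}^'m::{finite,linorder} \<Rightarrow> real^'n::{finite,linorder}^'m::{finite,linorder}" where
  "T_mat s U V Ai = (\<chi> i j. if s \<le> pos i \<and> s \<le> pos j then 0 else (transpose U ** Ai ** V) $ i $ j)"

definition assumption1 :: "nat \<Rightarrow> real^'m::{finite,linorder}^'m::{finite,linorder} \<Rightarrow> real^'n::{finite,linorder}^'n::{finite,linorder}
    \<Rightarrow> nat \<Rightarrow> (nat \<Rightarrow> real^'n::{finite,linorder}^'m::{finite,linorder}) \<Rightarrow> bool" where
  "assumption1 s U V l A \<longleftrightarrow>
     (\<forall>c. (\<Sum>i<l. c i *\<^sub>R T_mat s U V (A i)) = 0 \<longrightarrow> (\<forall>i<l. c i = 0))"

text \<open>M_X(\<Gamma>) = {U B V_\<Gamma>^T : B \<in> R^{m\<times>s}}, written as U [B O] V^T.\<close>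
definition M_Gamma :: "nat \<Rightarrow> real^'m::{finite,linorder}^'m::{finite,linorder} \<Rightarrow> real^'n::{finite,linorder}^'n::{finite,linorder}
    \<Rightarrow> (real^'n::{finite,linorder}^'m::{finite,linorder}) set" where
  "M_Gamma s U V = {U ** B ** transpose V | B. \<forall>i j. s \<le> pos j \<longrightarrow> B $ i $ j = 0}"

end

theory Submission
  imports Defs
begin


lemma inner_mm_left:
  fixes A :: "real^'n^'m" and B :: "real^'k^'m" and C :: "real^'n^'k"
  shows "A \<bullet> (B ** C) = (transpose B ** A) \<bullet> C"
  unfolding inner_vec_def matrix_matrix_mult_def transpose_def
  apply (simp add: sum_distrib_left sum_distrib_right mult_ac sum.swap[of _ "UNIV::'m set"])
  apply (rule sum.cong[OF refl], rule sum.swap)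
  done

lemma inner_mm_right:
  fixes A :: "real^'n^'m" and C :: "real^'k^'m" and B :: "real^'n^'k"
  shows "A \<bullet> (C ** B) = (A ** transpose B) \<bullet> C"
  unfolding inner_vec_def matrix_matrix_mult_def transpose_def
  by (simp add: sum_distrib_left sum_distrib_right mult_ac sum.swap[of _ "UNIV::'n set"])

lemma mm_scale_right: "(Z::real^'n^'m) ** (t *\<^sub>R C) = t *\<^sub>R (Z ** C)"
  by (simp add: vec_eq_iff matrix_matrix_mult_def sum_distrib_left mult_ac)
lemma mm_scale_left: "(t *\<^sub>R C) ** (Z::real^'n^'m) = t *\<^sub>R (C ** Z)"
  by (simp add: vec_eq_iff matrix_matrix_mult_def sum_distrib_left mult_ac)

lemma tendsto_mm:
  fixes F :: "'a \<Rightarrow> real^'k^'m" and G :: "'a \<Rightarrow> real^'n^'k"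
  assumes "(F \<longlongrightarrow> A) net" "(G \<longlongrightarrow> B) net"
  shows "((\<lambda>x. F x ** G x) \<longlongrightarrow> A ** B) net"
  unfolding matrix_matrix_mult_def
  by (intro tendsto_intros assms)

lemma tendsto_transpose:
  fixes F :: "'a \<Rightarrow> real^'k^'m"
  assumes "(F \<longlongrightarrow> A) net"
  shows "((\<lambda>x. transpose (F x)) \<longlongrightarrow> transpose A) net"
  unfolding transpose_def
  by (intro tendsto_intros assms)

lemma matrix_add_rdistrib': "((B + C) ** A) = (B ** A) + (C ** A)"
  by (vector matrix_matrix_mult_def sum.distrib[symmetric] field_simps)

lemma tangentI:
  fixes Z D :: "'a::real_normed_vector"
  assumes "\<And>t. t > 0 \<Longrightarrow> Z + t *\<^sub>R D \<in> S"
  shows "D \<in> bouligand_tangent S Z"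
proof -
  define t where "t = (\<lambda>k::nat. 1 / real (Suc k))"
  have t0: "t \<longlonglongrightarrow> 0" unfolding t_def by (rule LIMSEQ_Suc[OF lim_const_over_n])
  have tp: "\<forall>k. t k > 0" unfolding t_def by simp
  have "(\<lambda>k. Z + t k *\<^sub>R D) \<longlonglongrightarrow> Z + 0 *\<^sub>R D"
    by (intro tendsto_intros t0)
  moreover have "(\<lambda>k. ((Z + t k *\<^sub>R D) - Z) /\<^sub>R t k) = (\<lambda>k. D)"
    using tp by (auto simp: fun_eq_iff less_imp_neq[symmetric])
  ultimately show ?thesis unfolding bouligand_tangent_def
    using tp assms t0 by (intro CollectI exI[of _ "\<lambda>k. Z + t k *\<^sub>R D"] exI[of _ t]) auto
qed

lemma frechet_rank:
  fixes Z W :: "real^'n^'m"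
  assumes Z: "Z \<in> rank_set r" and W: "W \<in> frechet_normal (rank_set r) Z"
  shows "transpose Z ** W = 0 \<and> W ** transpose Z = 0"
proof
  define C where "C = transpose Z ** W"
  have "Z ** C \<in> bouligand_tangent (rank_set r) Z"
  proof (rule tangentI)
    fix t :: real
    have "Z + t *\<^sub>R (Z ** C) = Z ** (mat 1 + t *\<^sub>R C)"
      by (simp add: matrix_add_ldistrib mm_scale_right)
    moreover have "rank (Z ** (mat 1 + t *\<^sub>R C)) \<le> r"
      using rank_mul_le_left[of Z] Z unfolding rank_set_def by (meson le_trans mem_Collect_eq)
    ultimately show "Z + t *\<^sub>R (Z ** C) \<in> rank_set r" unfolding rank_set_def by simp
  qed
  then have "W \<bullet> (Z ** C) \<le> 0" using W unfolding frechet_normal_def by blast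
  then have "C \<bullet> C \<le> 0" by (simp add: inner_mm_left C_def)
  then show "transpose Z ** W = 0" unfolding C_def
    by (metis inner_eq_zero_iff inner_ge_zero order_antisym)
next
  define C where "C = W ** transpose Z"
  have "C ** Z \<in> bouligand_tangent (rank_set r) Z"
  proof (rule tangentI)
    fix t :: real
    have "Z + t *\<^sub>R (C ** Z) = (mat 1 + t *\<^sub>R C) ** Z"
      by (simp add: matrix_add_rdistrib' mm_scale_left)
    moreover have "rank ((mat 1 + t *\<^sub>R C) ** Z) \<le> r"
      using rank_mul_le_right[of _ Z] Z unfolding rank_set_def by (meson le_trans mem_Collect_eq)
    ultimately show "Z + t *\<^sub>R (C ** Z) \<in> rank_set r" unfolding rank_set_def by simp
  qed
  then have "W \<bullet> (C ** Z) \<le> 0" using W unfolding frechet_normal_def by blast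
  then have "C \<bullet> C \<le> 0" by (simp add: inner_mm_right C_def)
  then show "W ** transpose Z = 0" unfolding C_def
    by (metis inner_eq_zero_iff inner_ge_zero order_antisym)
qed

lemma mordukhovich_rank:
  fixes X W :: "real^'n^'m"
  assumes W: "W \<in> mordukhovich_normal (rank_set r) X"
  shows "transpose X ** W = 0 \<and> W ** transpose X = 0"
proof -
  obtain Xs Ws where h: "\<forall>k. Xs k \<in> rank_set r" "Xs \<longlonglongrightarrow> X"
     "\<forall>k. Ws k \<in> frechet_normal (rank_set r) (Xs k)" "Ws \<longlonglongrightarrow> W"
    using W unfolding mordukhovich_normal_def by blast
  have z: "\<And>k. transpose (Xs k) ** Ws k = 0 \<and> Ws k ** transpose (Xs k) = 0"
    using frechet_rank h by blast
  have "(\<lambda>k. transpose (Xs k) ** Ws k) \<longlonglongrightarrow> transpose X ** W"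
    by (intro tendsto_mm tendsto_transpose h)
  moreover have "(\<lambda>k. Ws k ** transpose (Xs k)) \<longlonglongrightarrow> W ** transpose X"
    by (intro tendsto_mm tendsto_transpose h)
  ultimately show ?thesis using z by (simp add: LIMSEQ_const_iff)
qed

lemma pos_mono: "(i::'a::{finite,linorder}) < j \<Longrightarrow> pos i < pos j"
  unfolding pos_def by (rule psubset_card_mono) auto

lemma pos_inj: "inj (pos :: 'a::{finite,linorder} \<Rightarrow> nat)"
  by (metis injI linorder_neqE_linordered_idom less_irrefl pos_mono linorder_neqE)

lemma pos_eq_iff: "pos (i::'a::{finite,linorder}) = pos j \<longleftrightarrow> i = j"
  using pos_inj by (auto dest: injD)

lemma pos_less: "pos (i::'a::{finite,linorder}) < CARD('a)"
  unfolding pos_def by (rule psubset_card_mono) auto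

lemma pos_image: "range (pos :: 'a::{finite,linorder} \<Rightarrow> nat) = {..<CARD('a)}"
proof -
  have "card (range (pos :: 'a \<Rightarrow> nat)) = CARD('a)"
    using pos_inj card_image by blast
  then show ?thesis
    using pos_less by (intro card_subset_eq) auto
qed

lemma pos_ex: "p < CARD('a::{finite,linorder}) \<Longrightarrow> \<exists>a::'a. pos a = p"
  using pos_image by (metis imageE lessThan_iff)

lemma svd_block_zero:
  fixes X W :: "real^'n::{finite,linorder}^'m::{finite,linorder}"
  assumes svd: "is_svd X s U \<sigma> V" and sle: "s \<le> CARD('n)" and nm: "CARD('n) \<le> CARD('m)"
    and z1: "transpose X ** W = 0" and z2: "W ** transpose X = 0"
  shows "\<forall>i j. pos i < s \<or> pos j < s \<longrightarrow> (transpose U ** W ** V) $ i $ j = 0"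
proof -
  define S :: "real^'n::{finite,linorder}^'m::{finite,linorder}" where "S = (\<chi> i j. if pos i = pos j \<and> pos i < s then \<sigma> (pos i) else 0)"
  define Q where "Q = transpose U ** W ** V"
  have U: "transpose U ** U = mat 1" "U ** transpose U = mat 1"
    and V: "transpose V ** V = mat 1" "V ** transpose V = mat 1"
    and X: "X = U ** S ** transpose V" and sp: "\<forall>k<s. \<sigma> k > 0"
    using svd unfolding is_svd_def orthogonal_matrix_def S_def by auto
  have tX: "transpose X = V ** transpose S ** transpose U"
    by (simp add: X matrix_transpose_mul matrix_mul_assoc)
  have "transpose S ** Q = transpose V ** (transpose X ** W) ** V"
  proof -
    have "transpose V ** transpose X = transpose S ** transpose U"
      by (simp add: tX matrix_mul_assoc V)
    then show ?thesis unfolding Q_def by (simp add: matrix_mul_assoc)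
  qed
  then have e1: "transpose S ** Q = 0" using z1 by simp
  have "Q ** transpose S = transpose U ** (W ** transpose X) ** U"
  proof -
    have "transpose X ** U = V ** transpose S"
      by (simp add: tX matrix_mul_assoc[symmetric] U)
    then show ?thesis unfolding Q_def by (simp add: matrix_mul_assoc[symmetric])
  qed
  then have e2: "Q ** transpose S = 0" using z2 by simp
  show ?thesis unfolding Q_def[symmetric]
  proof (intro allI impI)
    fix i :: 'm and j :: 'n
    assume "pos i < s \<or> pos j < s"
    then show "Q $ i $ j = 0"
    proof
      assume pi: "pos i < s"
      then obtain b :: 'n where b: "pos b = pos i" using pos_ex sle by (metis order_less_le_trans)
      have "(transpose S ** Q) $ b $ j = (\<Sum>k\<in>UNIV. (if k = i \<and> pos k < s then \<sigma> (pos k) else 0) * Q $ k $ j)"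
        unfolding matrix_matrix_mult_def transpose_def S_def by (simp add: b pos_eq_iff)
      also have "\<dots> = (\<Sum>k\<in>UNIV. if k = i then \<sigma> (pos i) * Q $ i $ j else 0)"
        by (rule sum.cong) (auto simp: pi)
      also have "\<dots> = \<sigma> (pos i) * Q $ i $ j" by simp
      finally have "\<sigma> (pos i) * Q $ i $ j = 0" using e1 by simp
      then show ?thesis using sp pi by (metis less_irrefl mult_eq_0_iff)
    next
      assume pj: "pos j < s"
      then obtain a :: 'm where a: "pos a = pos j" using pos_ex sle nm
        by (metis order_less_le_trans)
      have "(Q ** transpose S) $ i $ a = (\<Sum>k\<in>UNIV. Q $ i $ k * (if j = k \<and> pos k < s then \<sigma> (pos k) else 0))"
        unfolding matrix_matrix_mult_def transpose_def S_def by (simp add: a pos_eq_iff) (rule sum.cong, auto simp: a)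
      also have "\<dots> = (\<Sum>k\<in>UNIV. if k = j then \<sigma> (pos j) * Q $ i $ j else 0)"
        by (rule sum.cong) (auto simp: pj)
      also have "\<dots> = \<sigma> (pos j) * Q $ i $ j" by simp
      finally have "\<sigma> (pos j) * Q $ i $ j = 0" using e2 by simp
      then show ?thesis using sp pj by (metis less_irrefl mult_eq_0_iff)
    qed
  qed
qed

lemma convex_tangent:
  fixes f :: "'a::real_inner \<Rightarrow> real"
  assumes cvx: "convex_on UNIV f" and d: "(f has_derivative (\<lambda>H. g \<bullet> H)) (at X)"
  shows "f X + g \<bullet> (Y - X) \<le> f Y"
proof -
  define D where "D = Y - X"
  define h where "h = (\<lambda>t::real. f (X + t *\<^sub>R D))"
  have hc: "convex_on UNIV h"
  proof (rule convex_onI)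
    fix t a b :: real assume t: "0 < t" "t < 1"
    have e: "X + ((1 - t) *\<^sub>R a + t *\<^sub>R b) *\<^sub>R D = (1 - t) *\<^sub>R (X + a *\<^sub>R D) + t *\<^sub>R (X + b *\<^sub>R D)"
      by (simp add: algebra_simps)
    show "h ((1 - t) *\<^sub>R a + t *\<^sub>R b) \<le> (1 - t) * h a + t * h b"
      unfolding h_def e using convex_onD[OF cvx, of t] t by simp
  qed simp
  have "((\<lambda>t::real. X + t *\<^sub>R D) has_derivative (\<lambda>t. t *\<^sub>R D)) (at 0)"
    by (auto intro!: derivative_eq_intros)
  then have "(h has_derivative (\<lambda>t. g \<bullet> (t *\<^sub>R D))) (at 0)"
  proof -
    have d': "(f has_derivative (\<lambda>H. g \<bullet> H)) (at (X + 0 *\<^sub>R D))" using d by simp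
    show ?thesis unfolding h_def using has_derivative_compose[OF \<open>((\<lambda>t::real. X + t *\<^sub>R D) has_derivative _) _\<close> d'] by simp
  qed
  then have "(h has_field_derivative (g \<bullet> D)) (at 0)"
  proof -
    have "(\<lambda>t. g \<bullet> (t *\<^sub>R D)) = (*) (g \<bullet> D)" by (auto simp: fun_eq_iff)
    then show ?thesis using \<open>(h has_derivative _) _\<close> by (simp add: has_field_derivative_def)
  qed
  then have "h 1 - h 0 \<ge> (g \<bullet> D) * (1 - 0)"
    by (intro convex_on_imp_above_tangent[OF hc]) auto
  then show ?thesis unfolding h_def D_def by simp
qed

lemma part2:
  fixes f :: "real^'n::{finite,linorder}^'m::{finite,linorder} \<Rightarrow> real"
    and gradf :: "real^'n::{finite,linorder}^'m::{finite,linorder} \<Rightarrow> real^'n::{finite,linorder}^'m::{finite,linorder}"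
    and X Y :: "real^'n::{finite,linorder}^'m::{finite,linorder}"
  assumes dims: "r < CARD('n)" "CARD('n) \<le> CARD('m)"
    and deriv: "\<And>Z. (f has_derivative (\<lambda>H. gradf Z \<bullet> H)) (at Z)"
    and srank: "s = rank X"
    and svd: "is_svd X s U \<sigma> V"
    and cvx: "convex_on UNIV f" and ms: "M_stationary gradf l A b r X"
    and Y: "Y \<in> affine_set l A b \<inter> M_Gamma s U V"
  shows "f X \<le> f Y"
proof -
  obtain y where W: "- lagrangian_grad gradf l A X y \<in> mordukhovich_normal (rank_set r) X"
    and Xa: "X \<in> affine_set l A b" and Xr: "X \<in> rank_set r"
    using ms unfolding M_stationary_def by blast
  define W where "W = - lagrangian_grad gradf l A X y"
  have sle: "s \<le> CARD('n)" using Xr srank dims unfolding rank_set_def by simp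
  have Q0: "\<forall>i j. pos i < s \<or> pos j < s \<longrightarrow> (transpose U ** W ** V) $ i $ j = 0"
    using svd_block_zero[OF svd sle dims(2)] mordukhovich_rank[OF W] unfolding W_def by blast
  obtain B where B: "Y = U ** B ** transpose V" "\<forall>i j. s \<le> pos j \<longrightarrow> B $ i $ j = 0"
    using Y unfolding M_Gamma_def by blast
  define S :: "real^'n::{finite,linorder}^'m::{finite,linorder}" where
    "S = (\<chi> i j. if pos i = pos j \<and> pos i < s then \<sigma> (pos i) else 0)"
  have X: "X = U ** S ** transpose V" using svd unfolding is_svd_def S_def by auto
  define D where "D = B - S"
  have D0: "\<forall>i j. s \<le> pos j \<longrightarrow> D $ i $ j = 0" using B(2) unfolding D_def S_def by auto
  have YX: "Y - X = U ** D ** transpose V"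
    unfolding B X D_def
    by (simp add: vec_eq_iff matrix_matrix_mult_def sum_subtractf algebra_simps)
  have "W \<bullet> (Y - X) = (transpose U ** W ** V) \<bullet> D"
    unfolding YX using inner_mm_right[of W "U ** D" "transpose V"] inner_mm_left[of "W ** V" U D]
    by (simp add: matrix_mul_assoc)
  also have "\<dots> = 0"
    unfolding inner_vec_def inner_real_def
    using Q0 D0 by (intro sum.neutral ballI) (metis mult_eq_0_iff not_le)
  finally have w0: "W \<bullet> (Y - X) = 0" .
  have a0: "\<And>i. i < l \<Longrightarrow> A i \<bullet> (Y - X) = 0"
    using Y Xa unfolding affine_set_def by (simp add: inner_diff_right)
  have "gradf X \<bullet> (Y - X) = - (W \<bullet> (Y - X)) - (\<Sum>i<l. y i * (A i \<bullet> (Y - X)))"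
    unfolding W_def lagrangian_grad_def by (simp add: inner_sum_left inner_diff_left)
  also have "\<dots> = 0" using w0 a0 by simp
  finally have "gradf X \<bullet> (Y - X) = 0" .
  then show ?thesis using convex_tangent[OF cvx deriv[of X], of Y] by simp
qed

lemma frechet_min:
  fixes \<phi> :: "'a::real_inner \<Rightarrow> real"
  assumes Z: "Z \<in> S" and rho: "\<rho> > 0" and mn: "\<forall>Y\<in>S. dist Y Z < \<rho> \<longrightarrow> \<phi> Z \<le> \<phi> Y"
    and d: "(\<phi> has_derivative (\<lambda>H. g \<bullet> H)) (at Z)"
  shows "- g \<in> frechet_normal S Z"
  unfolding frechet_normal_def
proof (intro CollectI ballI)
  fix \<Xi> assume "\<Xi> \<in> bouligand_tangent S Z"
  then obtain Xs t where h: "\<forall>k. Xs k \<in> S" "Xs \<longlonglongrightarrow> Z" "\<forall>k. t k > 0" "t \<longlonglongrightarrow> 0"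
    "(\<lambda>k. (Xs k - Z) /\<^sub>R t k) \<longlonglongrightarrow> \<Xi>"
    unfolding bouligand_tangent_def by blast
  define R where "R = (\<lambda>y. ((\<phi> y - \<phi> Z) - g \<bullet> (y - Z)) / norm (y - Z))"
  have "(R \<longlongrightarrow> 0) (at Z)"
    using d unfolding has_derivative_at_within R_def by (simp add: divide_inverse mult.commute)
  moreover have "R Z = 0" unfolding R_def by simp
  ultimately have "isCont R Z" unfolding isCont_def by simp
  then have R0: "(\<lambda>k. R (Xs k)) \<longlonglongrightarrow> 0" using isCont_tendsto_compose[OF _ h(2)] \<open>R Z = 0\<close> by metis
  have eq: "(\<phi> (Xs k) - \<phi> Z) / t k = g \<bullet> ((Xs k - Z) /\<^sub>R t k) + R (Xs k) * norm ((Xs k - Z) /\<^sub>R t k)" for k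
  proof (cases "Xs k = Z")
    case True then show ?thesis by (simp add: R_def)
  next
    case False
    then have "norm (Xs k - Z) \<noteq> 0" by simp
    have tk: "t k > 0" using h(3) by blast
    have n1: "norm ((Xs k - Z) /\<^sub>R t k) = norm (Xs k - Z) / t k" using tk by (simp add: divide_inverse mult.commute)
    have n2: "g \<bullet> ((Xs k - Z) /\<^sub>R t k) = (g \<bullet> (Xs k - Z)) / t k" by (simp add: divide_inverse mult.commute)
    show ?thesis unfolding n1 n2 R_def using \<open>norm (Xs k - Z) \<noteq> 0\<close> tk
      by (simp add: field_simps)
  qed
  have "(\<lambda>k. g \<bullet> ((Xs k - Z) /\<^sub>R t k) + R (Xs k) * norm ((Xs k - Z) /\<^sub>R t k)) \<longlonglongrightarrow> g \<bullet> \<Xi> + 0 * norm \<Xi>"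
    by (intro tendsto_intros h R0)
  then have lim: "(\<lambda>k. (\<phi> (Xs k) - \<phi> Z) / t k) \<longlonglongrightarrow> g \<bullet> \<Xi>" unfolding eq by simp
  have "eventually (\<lambda>k. dist (Xs k) Z < \<rho>) sequentially"
    using h(2) rho by (rule tendstoD)
  then have "eventually (\<lambda>k. 0 \<le> (\<phi> (Xs k) - \<phi> Z) / t k) sequentially"
  proof eventually_elim
    case (elim k) then show ?case using mn h(1,3) by (simp add: less_imp_le)
  qed
  then have "0 \<le> g \<bullet> \<Xi>" using lim by (intro tendsto_lowerbound) auto
  then show "- g \<bullet> \<Xi> \<le> 0" by simp
qed

lemma frechet_cone: "W \<in> frechet_normal S Z \<Longrightarrow> c \<ge> 0 \<Longrightarrow> c *\<^sub>R W \<in> frechet_normal S Z"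
  unfolding frechet_normal_def by (auto intro: mult_nonneg_nonpos)



lemma tendsto_det:
  fixes F :: "'a \<Rightarrow> real^'n^'n"
  assumes "(F \<longlongrightarrow> A) net"
  shows "((\<lambda>x. det (F x)) \<longlongrightarrow> det A) net"
  unfolding det_def by (intro tendsto_sum tendsto_mult tendsto_const tendsto_prod tendsto_vec_nth assms)

lemma tendsto_mv:
  fixes F :: "'a \<Rightarrow> real^'n^'m"
  assumes "(F \<longlongrightarrow> A) net"
  shows "((\<lambda>x. F x *v v) \<longlongrightarrow> A *v v) net"
  unfolding matrix_vector_mult_def by (intro tendsto_vec_lambda tendsto_sum tendsto_mult tendsto_const tendsto_vec_nth assms)

lemma rank_set_closed: "closed (rank_set r :: (real^'n^'m) set)"
  unfolding closed_sequential_limits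
proof (intro allI impI; elim conjE)
  fix As :: "nat \<Rightarrow> real^'n^'m" and A
  assume As: "\<forall>j. As j \<in> rank_set r" and lim: "As \<longlonglongrightarrow> A"
  show "A \<in> rank_set r"
  proof (rule ccontr)
    assume "A \<notin> rank_set r"
    then have rA: "rank A > r" unfolding rank_set_def by simp
    obtain I where I: "I \<subseteq> range ((*v) A)" "independent I" "range ((*v) A) \<subseteq> span I"
        "card I = dim (range ((*v) A))"
      by (rule basis_exists)
    have cI: "card I = rank A" using I(4) by (simp add: rank_dim_range)
    obtain Bs where Bs: "I \<subseteq> Bs" "Bs \<subseteq> UNIV" "independent Bs" "UNIV \<subseteq> span Bs"
      by (rule maximal_independent_subset_extend[OF subset_UNIV I(2)])
    have fB: "finite Bs" using Bs(3) independent_bound_general by blast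
    have "card Bs = dim Bs" using dim_eq_card_independent[OF Bs(3)] by simp
    also have "\<dots> = dim (UNIV :: (real^'m) set)"
      using Bs(4) by (metis dim_span span_eq_iff subspace_UNIV top.extremum_uniqueI)
    also have "\<dots> = CARD('m)" by (simp add: DIM_cart)
    finally have cB: "card Bs = CARD('m)" .
    obtain col where col: "bij_betw col (UNIV::'m set) Bs"
      using finite_same_card_bij[of "UNIV::'m set" Bs] fB cB by auto
    define x where "x = (\<lambda>b. SOME v. A *v v = b)"
    have xI: "\<And>b. b \<in> I \<Longrightarrow> A *v x b = b"
      using I(1) unfolding x_def by (metis (mono_tags, lifting) imageE someI_ex subsetD)
    define Mj where "Mj = (\<lambda>j. (\<chi> i c. if col c \<in> I then (As j *v x (col c)) $ i else col c $ i) :: real^'m^'m)"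
    define Mi where "Mi = ((\<chi> i c. col c $ i) :: real^'m^'m)"
    have Mi': "Mi = (\<chi> i c. if col c \<in> I then (A *v x (col c)) $ i else col c $ i)"
      unfolding Mi_def by (simp add: xI vec_eq_iff)
    have "Mj \<longlonglongrightarrow> Mi" unfolding Mi' Mj_def
      apply (intro tendsto_vec_lambda)
      subgoal for i c by (cases "col c \<in> I") (auto intro!: tendsto_vec_nth tendsto_mv lim)
      done
    then have dl: "(\<lambda>j. det (Mj j)) \<longlonglongrightarrow> det Mi" by (rule tendsto_det)
    have colsMi: "columns Mi = Bs"
      using col unfolding columns_def column_def Mi_def bij_betw_def by (auto simp: vec_eq_iff)
    have "rank Mi = CARD('m)" unfolding column_rank_def colsMi
      using dim_eq_card_independent[OF Bs(3)] cB by simp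
    then have "det Mi \<noteq> 0" using det_eq_0_rank[of Mi] by simp
    then have "eventually (\<lambda>j. det (Mj j) \<noteq> 0) sequentially"
      using tendsto_imp_eventually_ne[OF dl] by blast
    then obtain j where dj: "det (Mj j) \<noteq> 0" by (meson eventually_sequentially order_refl)
    then have "rank (Mj j) = CARD('m)" using det_eq_0_rank rank_bound[of "Mj j"] by (metis le_less min.idem)
    then have inj: "inj ((*v) (Mj j))" using full_rank_injective by blast
    define C where "C = {c. col c \<in> I}"
    define E where "E = (\<lambda>c. axis c (1::real)) ` C"
    have indE: "independent E"
      by (rule independent_mono[OF independent_Basis]) (auto simp: E_def Basis_vec_def)
    have "independent ((*v) (Mj j) ` E)"
      by (rule linear_independent_injective_image[OF _ indE]) (use inj in \<open>auto intro: inj_on_subset\<close>)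
    moreover have sub: "(*v) (Mj j) ` E \<subseteq> range ((*v) (As j))"
    proof
      fix v assume "v \<in> (*v) (Mj j) ` E"
      then obtain c where c: "c \<in> C" "v = Mj j *v axis c 1" unfolding E_def by blast
      then have "v = As j *v x (col c)"
        unfolding matrix_vector_mult_basis by (simp add: column_def Mj_def C_def vec_eq_iff)
      then show "v \<in> range ((*v) (As j))" by blast
    qed
    ultimately have "card ((*v) (Mj j) ` E) \<le> dim (range ((*v) (As j)))"
      by (intro independent_card_le_dim)
    also have "\<dots> \<le> r" using As rank_dim_range[of "As j"] unfolding rank_set_def by (metis mem_Collect_eq)
    finally have le: "card ((*v) (Mj j) ` E) \<le> r" .
    have "card ((*v) (Mj j) ` E) = card E" using inj by (simp add: card_image inj_on_subset)
    also have "\<dots> = card C" unfolding E_def by (rule card_image) (auto simp: inj_on_def axis_eq_axis)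
    also have "\<dots> = card I"
    proof -
      have "col ` C = I" using col Bs(1) unfolding C_def bij_betw_def by auto
      moreover have "inj_on col C" using col unfolding bij_betw_def by (auto intro: inj_on_subset)
      ultimately show ?thesis by (metis card_image)
    qed
    finally show False using le cI rA by simp
  qed
qed



lemma penalty_seq:
  fixes f pen :: "'a::euclidean_space \<Rightarrow> real"
  assumes K: "compact K" "X \<in> K" and cf: "continuous_on K f" and cp: "continuous_on K pen"
    and p0: "\<And>Y. pen Y \<ge> 0" and pX: "pen X = 0"
    and mn: "\<And>Y. Y \<in> K \<Longrightarrow> pen Y = 0 \<Longrightarrow> f X \<le> f Y"
  shows "\<exists>Zs q. strict_mono q \<and> Zs \<longlonglongrightarrow> X \<and> (\<forall>j. Zs j \<in> K \<and> (\<forall>Y\<in>K.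
      f (Zs j) + real (q j) * pen (Zs j) + (Zs j - X) \<bullet> (Zs j - X) \<le> f Y + real (q j) * pen Y + (Y - X) \<bullet> (Y - X)))"
proof -
  define \<phi> where "\<phi> = (\<lambda>k::nat. \<lambda>Y. f Y + real k * pen Y + (Y - X) \<bullet> (Y - X))"
  have "\<forall>k. \<exists>Z\<in>K. \<forall>Y\<in>K. \<phi> k Z \<le> \<phi> k Y"
  proof
    fix k
    have "continuous_on K (\<phi> k)" unfolding \<phi>_def
      by (intro continuous_intros cf cp)
    then show "\<exists>Z\<in>K. \<forall>Y\<in>K. \<phi> k Z \<le> \<phi> k Y"
      using continuous_attains_inf[OF K(1)] K(2) by blast
  qed
  then obtain Zs where Zs: "\<And>k. Zs k \<in> K" "\<And>k Y. Y \<in> K \<Longrightarrow> \<phi> k (Zs k) \<le> \<phi> k Y"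
    by metis
  obtain m where m: "\<And>Y. Y \<in> K \<Longrightarrow> m \<le> f Y"
    using continuous_attains_inf[OF K(1) _ cf] K(2) by blast
  have a: "f (Zs k) + (Zs k - X) \<bullet> (Zs k - X) \<le> f X" for k
  proof -
    have "0 \<le> real k * pen (Zs k)" by (simp add: p0)
    then show ?thesis using Zs(2)[OF K(2), of k] unfolding \<phi>_def pX by simp
  qed
  have b: "real k * pen (Zs k) \<le> f X - m" for k
  proof -
    have "0 \<le> (Zs k - X) \<bullet> (Zs k - X)" by simp
    moreover have "f (Zs k) + real k * pen (Zs k) + (Zs k - X) \<bullet> (Zs k - X) \<le> f X"
      using Zs(2)[OF K(2), of k] unfolding \<phi>_def pX by simp
    ultimately show ?thesis using m[OF Zs(1)[of k]] by linarith
  qed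
  obtain l q where lq: "l \<in> K" "strict_mono q" "(Zs \<circ> q) \<longlonglongrightarrow> l"
    using seq_compactE[OF compact_imp_seq_compact[OF K(1)], of Zs] Zs(1) by blast
  have qj: "filterlim (\<lambda>j. real (q j)) at_infinity sequentially"
    by (intro filterlim_at_top_imp_at_infinity filterlim_compose[OF filterlim_real_sequentially]
        filterlim_subseq lq(2))
  have "(\<lambda>j. pen (Zs (q j))) \<longlonglongrightarrow> 0"
  proof (rule tendsto_sandwich)
    show "\<forall>\<^sub>F j in sequentially. 0 \<le> pen (Zs (q j))" using p0 by simp
    have "\<forall>\<^sub>F j in sequentially. q j > 0"
      using filterlim_subseq[OF lq(2)] unfolding filterlim_at_top
      by (metis (mono_tags, lifting) eventually_sequentially filterlim_subseq lq(2) seq_suble gr0I le_zero_eq less_numeral_extra(1) not_one_le_zero)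
    then show "\<forall>\<^sub>F j in sequentially. pen (Zs (q j)) \<le> (f X - m) / real (q j)"
    proof eventually_elim
      case (elim j) then show ?case using b[of "q j"] by (simp add: field_simps mult.commute)
    qed
    show "(\<lambda>j. 0) \<longlonglongrightarrow> 0" by simp
    show "(\<lambda>j. (f X - m) / real (q j)) \<longlonglongrightarrow> 0"
      by (rule tendsto_divide_0[OF tendsto_const qj])
  qed
  moreover have "(\<lambda>j. pen (Zs (q j))) \<longlonglongrightarrow> pen l"
    using continuous_on_tendsto_compose[OF cp lq(3)[unfolded comp_def] lq(1)] Zs(1) by simp
  ultimately have pl: "pen l = 0" using LIMSEQ_unique by blast
  have fl: "f X \<le> f l" using mn[OF lq(1) pl] .
  have "(\<lambda>j. f (Zs (q j)) + (Zs (q j) - X) \<bullet> (Zs (q j) - X)) \<longlonglongrightarrow> f l + (l - X) \<bullet> (l - X)"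
    using continuous_on_tendsto_compose[OF cf lq(3)[unfolded comp_def] lq(1)] Zs(1)
    by (intro tendsto_intros lq(3)[unfolded comp_def]) simp
  then have "f l + (l - X) \<bullet> (l - X) \<le> f X"
    using a by (intro tendsto_le[OF _ tendsto_const]) auto
  then have "(l - X) \<bullet> (l - X) \<le> 0" using fl by simp
  then have lX: "l = X" by (metis inner_eq_zero_iff inner_ge_zero order_antisym eq_iff_diff_eq_0)
  show ?thesis
    using Zs lq(2,3) lX unfolding \<phi>_def comp_def
    by (intro exI[of _ "Zs \<circ> q"] exI[of _ q]) (auto simp: comp_def)
qed



lemma T_mat_add: "T_mat s U V (M + N) = T_mat s U V M + T_mat s U V N"
  unfolding T_mat_def by (simp add: vec_eq_iff matrix_add_ldistrib matrix_add_rdistrib')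

lemma T_mat_scale: "T_mat s U V (c *\<^sub>R M) = c *\<^sub>R T_mat s U V M"
  unfolding T_mat_def by (simp add: vec_eq_iff mm_scale_left mm_scale_right)

lemma T_mat_zero: "T_mat s U V 0 = 0"
  unfolding T_mat_def by (simp add: vec_eq_iff)

lemma T_mat_sum: "finite I \<Longrightarrow> T_mat s U V (\<Sum>i\<in>I. c i *\<^sub>R M i) = (\<Sum>i\<in>I. c i *\<^sub>R T_mat s U V (M i))"
  by (induction I rule: finite_induct) (simp_all add: T_mat_zero T_mat_add T_mat_scale)

lemma mordukhovich_cone:
  assumes "W \<in> mordukhovich_normal S X" "c \<ge> 0"
  shows "c *\<^sub>R W \<in> mordukhovich_normal S X"
proof -
  obtain Xs Ws where h: "\<forall>k. Xs k \<in> S" "Xs \<longlonglongrightarrow> X" "\<forall>k. Ws k \<in> frechet_normal S (Xs k)" "Ws \<longlonglongrightarrow> W"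
    using assms(1) unfolding mordukhovich_normal_def by blast
  have "(\<lambda>k. c *\<^sub>R Ws k) \<longlonglongrightarrow> c *\<^sub>R W" by (intro tendsto_intros h)
  moreover have "\<forall>k. c *\<^sub>R Ws k \<in> frechet_normal S (Xs k)" using h(3) assms(2) frechet_cone by blast
  ultimately show ?thesis unfolding mordukhovich_normal_def using h(1,2)
    by (intro CollectI exI[of _ Xs] exI[of _ "\<lambda>k. c *\<^sub>R Ws k"]) simp
qed


lemma deriv_phi:
  fixes f :: "'a::real_inner \<Rightarrow> real"
  assumes df: "(f has_derivative (\<lambda>H. g \<bullet> H)) (at Z)"
  shows "((\<lambda>Y. f Y + c * (\<Sum>i<l. (A i \<bullet> Y - b i)^2) + (Y - X) \<bullet> (Y - X)) has_derivative
     (\<lambda>H. (g + (\<Sum>i<l. (2 * c * (A i \<bullet> Z - b i)) *\<^sub>R A i) + 2 *\<^sub>R (Z - X)) \<bullet> H)) (at Z)"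
proof -
  have d1: "((\<lambda>Y. A i \<bullet> Y - b i) has_derivative (\<lambda>H. A i \<bullet> H)) (at Z)" for i
    using has_derivative_diff[OF bounded_linear.has_derivative[OF bounded_linear_inner_right has_derivative_ident] has_derivative_const]
    by simp
  have d2: "((\<lambda>Y. (A i \<bullet> Y - b i)^2) has_derivative (\<lambda>H. 2 * (A i \<bullet> Z - b i) * (A i \<bullet> H))) (at Z)" for i
    using has_derivative_mult[OF d1[of i] d1[of i]] unfolding power2_eq_square
    by (simp add: algebra_simps)
  have d3: "((\<lambda>Y. c * (\<Sum>i<l. (A i \<bullet> Y - b i)^2)) has_derivative (\<lambda>H. c * (\<Sum>i<l. 2 * (A i \<bullet> Z - b i) * (A i \<bullet> H)))) (at Z)"
    by (intro has_derivative_mult_right has_derivative_sum d2)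
  have d4: "((\<lambda>Y. Y - X) has_derivative (\<lambda>H. H)) (at Z)"
    using has_derivative_diff[OF has_derivative_ident has_derivative_const] by simp
  have d5: "((\<lambda>Y. (Y - X) \<bullet> (Y - X)) has_derivative (\<lambda>H. (Z - X) \<bullet> H + H \<bullet> (Z - X))) (at Z)"
    using has_derivative_inner[OF d4 d4] by simp
  have "((\<lambda>Y. f Y + c * (\<Sum>i<l. (A i \<bullet> Y - b i)^2) + (Y - X) \<bullet> (Y - X)) has_derivative
     (\<lambda>H. g \<bullet> H + c * (\<Sum>i<l. 2 * (A i \<bullet> Z - b i) * (A i \<bullet> H)) + ((Z - X) \<bullet> H + H \<bullet> (Z - X)))) (at Z)"
    by (intro has_derivative_add df d3 d5)
  moreover have "(\<lambda>H. g \<bullet> H + c * (\<Sum>i<l. 2 * (A i \<bullet> Z - b i) * (A i \<bullet> H)) + ((Z - X) \<bullet> H + H \<bullet> (Z - X)))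
     = (\<lambda>H. (g + (\<Sum>i<l. (2 * c * (A i \<bullet> Z - b i)) *\<^sub>R A i) + 2 *\<^sub>R (Z - X)) \<bullet> H)"
    by (simp add: fun_eq_iff inner_add_left inner_sum_left sum_distrib_left inner_commute[of _ "Z - X"] mult_ac)
  ultimately show ?thesis by simp
qed


lemma part1:
  fixes f :: "real^'n::{finite,linorder}^'m::{finite,linorder} \<Rightarrow> real"
    and gradf :: "real^'n::{finite,linorder}^'m::{finite,linorder} \<Rightarrow> real^'n::{finite,linorder}^'m::{finite,linorder}"
    and A :: "nat \<Rightarrow> real^'n::{finite,linorder}^'m::{finite,linorder}" and b :: "nat \<Rightarrow> real" and l r s :: nat
    and X :: "real^'n::{finite,linorder}^'m::{finite,linorder}" and U :: "real^'m::{finite,linorder}^'m::{finite,linorder}" and V :: "real^'n::{finite,linorder}^'n::{finite,linorder}" and \<sigma> :: "nat \<Rightarrow> real"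
  assumes dims: "r < CARD('n)" "CARD('n) \<le> CARD('m)"
    and deriv: "\<And>Z. (f has_derivative (\<lambda>H. gradf Z \<bullet> H)) (at Z)"
    and cont: "continuous_on UNIV gradf"
    and srank: "s = rank X"
    and svd: "is_svd X s U \<sigma> V"
    and lm: "local_minimizer f l A b r X" and a1: "assumption1 s U V l A"
  shows "M_stationary gradf l A b r X"
proof -
  obtain \<epsilon> where \<epsilon>: "\<epsilon> > 0" and Xa: "X \<in> affine_set l A b" and Xr: "X \<in> rank_set r"
    and mn: "\<forall>Y\<in>affine_set l A b \<inter> rank_set r. dist Y X < \<epsilon> \<longrightarrow> f X \<le> f Y"
    using lm unfolding local_minimizer_def by blast
  define \<delta> where "\<delta> = \<epsilon> / 2"
  have \<delta>: "\<delta> > 0" "\<delta> < \<epsilon>" using \<epsilon> unfolding \<delta>_def by auto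
  define K where "K = cball X \<delta> \<inter> rank_set r"
  define pen where "pen = (\<lambda>Y. \<Sum>i<l. (A i \<bullet> Y - b i)^2)"
  have cK: "compact K" unfolding K_def by (intro compact_Int_closed compact_cball rank_set_closed)
  have XK: "X \<in> K" unfolding K_def using Xr \<delta> by simp
  have cfU: "continuous_on UNIV f"
    using deriv has_derivative_continuous continuous_at_imp_continuous_on by blast
  have cf: "continuous_on K f" using continuous_on_subset[OF cfU] by blast
  have cp: "continuous_on K pen" unfolding pen_def by (intro continuous_intros)
  have p0: "\<And>Y. pen Y \<ge> 0" unfolding pen_def by (intro sum_nonneg) simp
  have pX: "pen X = 0" using Xa unfolding pen_def affine_set_def by simp
  have mnK: "f X \<le> f Y" if "Y \<in> K" "pen Y = 0" for Y
  proof -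
    have "\<forall>i\<in>{..<l}. (A i \<bullet> Y - b i)^2 = 0"
      using that(2) unfolding pen_def by (subst sum_nonneg_eq_0_iff[symmetric]) auto
    then have "Y \<in> affine_set l A b" unfolding affine_set_def by simp
    moreover have "dist Y X < \<epsilon>" using that(1) \<delta> unfolding K_def by (simp add: dist_commute)
    ultimately show ?thesis using mn that(1) unfolding K_def by blast
  qed
  obtain Zs q where q: "strict_mono q" and ZX: "Zs \<longlonglongrightarrow> X" and ZK: "\<And>j. Zs j \<in> K"
    and Zmin: "\<And>j Y. Y \<in> K \<Longrightarrow> f (Zs j) + real (q j) * pen (Zs j) + (Zs j - X) \<bullet> (Zs j - X)
        \<le> f Y + real (q j) * pen Y + (Y - X) \<bullet> (Y - X)"
    using penalty_seq[OF cK XK cf cp p0 pX mnK] by blast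
  obtain N where N: "\<And>j. j \<ge> N \<Longrightarrow> dist (Zs j) X < \<delta> / 2"
    using ZX \<delta> unfolding LIMSEQ_def by (metis half_gt_zero)
  define Z where "Z = (\<lambda>j. Zs (j + N))"
  define k where "k = (\<lambda>j. q (j + N))"
  define Sj where "Sj = (\<lambda>j. \<Sum>i<l. (2 * real (k j) * (A i \<bullet> Z j - b i)) *\<^sub>R A i)"
  define Hj where "Hj = (\<lambda>j. gradf (Z j) + 2 *\<^sub>R (Z j - X))"
  have ZX': "Z \<longlonglongrightarrow> X" unfolding Z_def using ZX by (rule LIMSEQ_ignore_initial_segment)
  have Zr: "Z j \<in> rank_set r" for j using ZK unfolding Z_def K_def by blast
  have FN: "- (Hj j + Sj j) \<in> frechet_normal (rank_set r) (Z j)" for j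
  proof -
    have "- (gradf (Z j) + Sj j + 2 *\<^sub>R (Z j - X)) \<in> frechet_normal (rank_set r) (Z j)"
    proof (rule frechet_min[OF Zr half_gt_zero[OF \<delta>(1)]])
      show "\<forall>Y\<in>rank_set r. dist Y (Z j) < \<delta> / 2 \<longrightarrow>
          (\<lambda>Y. f Y + real (k j) * (\<Sum>i<l. (A i \<bullet> Y - b i)^2) + (Y - X) \<bullet> (Y - X)) (Z j)
          \<le> (\<lambda>Y. f Y + real (k j) * (\<Sum>i<l. (A i \<bullet> Y - b i)^2) + (Y - X) \<bullet> (Y - X)) Y"
      proof (intro ballI impI)
        fix Y assume Y: "Y \<in> rank_set r" "dist Y (Z j) < \<delta> / 2"
        have "dist (Z j) X < \<delta> / 2" using N[of "j + N"] unfolding Z_def by simp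
        then have "dist Y X \<le> \<delta>" using Y(2) dist_triangle[of Y X "Z j"] by linarith
        then have "Y \<in> K" unfolding K_def using Y(1) by (simp add: dist_commute)
        then show "(\<lambda>Y. f Y + real (k j) * (\<Sum>i<l. (A i \<bullet> Y - b i)^2) + (Y - X) \<bullet> (Y - X)) (Z j)
          \<le> (\<lambda>Y. f Y + real (k j) * (\<Sum>i<l. (A i \<bullet> Y - b i)^2) + (Y - X) \<bullet> (Y - X)) Y"
          using Zmin[of Y "j + N"] unfolding Z_def k_def pen_def by simp
      qed
      show "((\<lambda>Y. f Y + real (k j) * (\<Sum>i<l. (A i \<bullet> Y - b i)^2) + (Y - X) \<bullet> (Y - X)) has_derivative
          (\<lambda>H. (gradf (Z j) + Sj j + 2 *\<^sub>R (Z j - X)) \<bullet> H)) (at (Z j))"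
        unfolding Sj_def using deriv_phi[OF deriv[of "Z j"], where c="real (k j)" and l=l and A=A and b=b and X=X]
        by (simp add: mult_ac)
    qed
    then show ?thesis unfolding Hj_def by (simp add: algebra_simps)
  qed
  define Sp where "Sp = {(\<Sum>i<l. y i *\<^sub>R A i) | y. True}"
  have subSp: "subspace Sp" unfolding subspace_def Sp_def
  proof (intro conjI ballI allI)
    show "0 \<in> {(\<Sum>i<l. y i *\<^sub>R A i) | y. True}" by (intro CollectI exI[of _ "\<lambda>i. 0"]) simp
  next
    fix x y assume "x \<in> {(\<Sum>i<l. y i *\<^sub>R A i) | y. True}" "y \<in> {(\<Sum>i<l. y i *\<^sub>R A i) | y. True}"
    then obtain a c where "x = (\<Sum>i<l. a i *\<^sub>R A i)" "y = (\<Sum>i<l. c i *\<^sub>R A i)" by blast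
    then show "x + y \<in> {(\<Sum>i<l. y i *\<^sub>R A i) | y. True}"
      by (intro CollectI exI[of _ "\<lambda>i. a i + c i"]) (simp add: sum.distrib scaleR_add_left)
  next
    fix t :: real and x assume "x \<in> {(\<Sum>i<l. y i *\<^sub>R A i) | y. True}"
    then obtain a where "x = (\<Sum>i<l. a i *\<^sub>R A i)" by blast
    then show "t *\<^sub>R x \<in> {(\<Sum>i<l. y i *\<^sub>R A i) | y. True}"
      by (intro CollectI exI[of _ "\<lambda>i. t * a i"]) (simp add: scaleR_sum_right)
  qed
  have SjSp: "Sj j \<in> Sp" for j unfolding Sj_def Sp_def
    by (intro CollectI exI[of _ "\<lambda>i. 2 * real (k j) * (A i \<bullet> Z j - b i)"]) simp
  define c where "c = (\<lambda>j. max 1 (norm (Sj j)))"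
  have cpos: "c j \<ge> 1" for j unfolding c_def by simp
  define Pj where "Pj = (\<lambda>j. ((1 / c j) *\<^sub>R Sj j, 1 / c j))"
  have PjK: "Pj j \<in> cball 0 1 \<times> {0..1}" for j
  proof -
    have "norm ((1 / c j) *\<^sub>R Sj j) \<le> 1"
      using cpos[of j] unfolding c_def by (simp add: field_simps)
    then show ?thesis unfolding Pj_def using cpos[of j] by simp
  qed
  obtain Tt q2 where Tt: "Tt \<in> cball 0 1 \<times> {0..1}" and q2: "strict_mono q2" and PT: "(Pj \<circ> q2) \<longlonglongrightarrow> Tt"
    using seq_compactE[OF compact_imp_seq_compact[OF compact_Times[OF compact_cball compact_Icc]], of Pj] PjK
    by blast
  obtain T \<tau> where Tt': "Tt = (T, \<tau>)" by (cases Tt)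
  have \<tau>: "0 \<le> \<tau>" using Tt unfolding Tt' by simp
  have lim1: "(\<lambda>i. (1 / c (q2 i)) *\<^sub>R Sj (q2 i)) \<longlonglongrightarrow> T"
    using tendsto_fst[OF PT] unfolding Tt' Pj_def comp_def by simp
  have lim2: "(\<lambda>i. 1 / c (q2 i)) \<longlonglongrightarrow> \<tau>"
    using tendsto_snd[OF PT] unfolding Tt' Pj_def comp_def by simp
  have TSp: "T \<in> Sp"
    using closed_sequentially[OF closed_subspace[OF subSp] _ lim1] subSp SjSp
    by (simp add: subspace_scale)
  have ZX2: "(\<lambda>i. Z (q2 i)) \<longlonglongrightarrow> X" using LIMSEQ_subseq_LIMSEQ[OF ZX' q2] by (simp add: comp_def)
  have gX: "(\<lambda>i. gradf (Z (q2 i))) \<longlonglongrightarrow> gradf X"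
    using continuous_on_tendsto_compose[OF cont ZX2] by simp
  have "(\<lambda>i. (1 / c (q2 i)) *\<^sub>R (- (Hj (q2 i) + Sj (q2 i)))) \<longlonglongrightarrow> - (\<tau> *\<^sub>R (gradf X + 2 *\<^sub>R (X - X)) + T)"
  proof -
    have "(\<lambda>i. - ((1 / c (q2 i)) *\<^sub>R Hj (q2 i) + (1 / c (q2 i)) *\<^sub>R Sj (q2 i))) \<longlonglongrightarrow> - (\<tau> *\<^sub>R (gradf X + 2 *\<^sub>R (X - X)) + T)"
      unfolding Hj_def by (intro tendsto_intros lim1 lim2 gX ZX2)
    then show ?thesis by (simp add: scaleR_add_right scaleR_diff_right)
  qed
  moreover have "\<forall>i. (1 / c (q2 i)) *\<^sub>R (- (Hj (q2 i) + Sj (q2 i))) \<in> frechet_normal (rank_set r) (Z (q2 i))"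
  proof
    fix i
    have "0 \<le> 1 / c (q2 i)" using cpos[of "q2 i"] by simp
    then show "(1 / c (q2 i)) *\<^sub>R (- (Hj (q2 i) + Sj (q2 i))) \<in> frechet_normal (rank_set r) (Z (q2 i))"
      using FN[of "q2 i"] frechet_cone by blast
  qed
  ultimately have MN: "- (\<tau> *\<^sub>R gradf X + T) \<in> mordukhovich_normal (rank_set r) X"
    unfolding mordukhovich_normal_def using Zr ZX2
    apply (rule_tac CollectI)
    apply (rule_tac x="\<lambda>i. Z (q2 i)" in exI)
    apply (rule_tac x="\<lambda>i. (1 / c (q2 i)) *\<^sub>R (- (Hj (q2 i) + Sj (q2 i)))" in exI)
    apply simp
    done
  show ?thesis
  proof (cases "\<tau> = 0")
    case True
    have sle: "s \<le> CARD('n)" using Xr srank dims unfolding rank_set_def by simp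
    have MT: "- T \<in> mordukhovich_normal (rank_set r) X" using MN True by simp
    obtain a where Ta: "T = (\<Sum>i<l. a i *\<^sub>R A i)" using TSp unfolding Sp_def by blast
    have Q0: "\<forall>i j. pos i < s \<or> pos j < s \<longrightarrow> (transpose U ** (- T) ** V) $ i $ j = 0"
      using svd_block_zero[OF svd sle dims(2)] mordukhovich_rank[OF MT] by blast
    have "T_mat s U V (- T) = 0"
      unfolding T_mat_def using Q0 by (simp add: vec_eq_iff) (metis not_le)
    moreover have "- T = (\<Sum>i<l. (- a i) *\<^sub>R A i)" unfolding Ta by (simp add: sum_negf)
    ultimately have "(\<Sum>i<l. (- a i) *\<^sub>R T_mat s U V (A i)) = 0"
      using T_mat_sum[of "{..<l}" s U V "\<lambda>i. - a i" A] by simp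
    then have "\<forall>i<l. - a i = 0" by (rule mp[OF spec[OF a1[unfolded assumption1_def], of "\<lambda>i. - a i"]])
    then have T0: "T = 0" unfolding Ta by simp
    have "eventually (\<lambda>i. 1 / c (q2 i) < 1) sequentially"
      using True by (intro order_tendstoD(2)[OF lim2]) simp
    then have "eventually (\<lambda>i. norm ((1 / c (q2 i)) *\<^sub>R Sj (q2 i)) = 1) sequentially"
    proof eventually_elim
      case (elim i)
      then have "c (q2 i) > 1" using cpos[of "q2 i"] by (simp add: field_simps)
      then have "c (q2 i) = norm (Sj (q2 i))" unfolding c_def by linarith
      moreover have "Sj (q2 i) \<noteq> 0" using \<open>c (q2 i) > 1\<close> calculation
        by (metis norm_zero not_one_less_zero)
      ultimately show ?case by simp
    qed
    then have "(\<lambda>i. norm ((1 / c (q2 i)) *\<^sub>R Sj (q2 i))) \<longlonglongrightarrow> 1"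
      by (rule tendsto_eventually)
    moreover have "(\<lambda>i. norm ((1 / c (q2 i)) *\<^sub>R Sj (q2 i))) \<longlonglongrightarrow> norm T"
      by (intro tendsto_intros lim1)
    ultimately have "norm T = 1" using LIMSEQ_unique by blast
    then show ?thesis using T0 by simp
  next
    case False
    then have \<tau>p: "\<tau> > 0" using \<tau> by simp
    have "(1 / \<tau>) *\<^sub>R (- (\<tau> *\<^sub>R gradf X + T)) \<in> mordukhovich_normal (rank_set r) X"
      using mordukhovich_cone[OF MN] \<tau>p by simp
    moreover have "(1 / \<tau>) *\<^sub>R T \<in> Sp" using TSp subSp by (simp add: subspace_scale)
    then obtain y where y: "(1 / \<tau>) *\<^sub>R T = (\<Sum>i<l. y i *\<^sub>R A i)" unfolding Sp_def by blast
    moreover have "(1 / \<tau>) *\<^sub>R (- (\<tau> *\<^sub>R gradf X + T)) = - lagrangian_grad gradf l A X y"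
      unfolding lagrangian_grad_def y[symmetric] using \<tau>p by (simp add: scaleR_add_right scaleR_diff_right)
    ultimately have "- lagrangian_grad gradf l A X y \<in> mordukhovich_normal (rank_set r) X"
      by simp
    then show ?thesis unfolding M_stationary_def using Xa Xr by blast
  qed
qed


theorem corollary4p1:
  fixes f :: "real^'n::{finite,linorder}^'m::{finite,linorder} \<Rightarrow> real"
    and gradf :: "real^'n::{finite,linorder}^'m::{finite,linorder} \<Rightarrow> real^'n::{finite,linorder}^'m::{finite,linorder}"
    and A :: "nat \<Rightarrow> real^'n::{finite,linorder}^'m::{finite,linorder}" and b :: "nat \<Rightarrow> real" and l r s :: nat
    and X :: "real^'n::{finite,linorder}^'m::{finite,linorder}" and U :: "real^'m::{finite,linorder}^'m::{finite,linorder}" and V :: "real^'n::{finite,linorder}^'n::{finite,linorder}" and \<sigma> :: "nat \<Rightarrow> real"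
  assumes dims: "r < CARD('n)" "CARD('n) \<le> CARD('m)"
    and deriv: "\<And>Z. (f has_derivative (\<lambda>H. gradf Z \<bullet> H)) (at Z)"
    and cont: "continuous_on UNIV gradf"
    and feas: "X \<in> affine_set l A b \<inter> rank_set r"
    and srank: "s = rank X"
    and svd: "is_svd X s U \<sigma> V"
  shows "(local_minimizer f l A b r X \<and> assumption1 s U V l A \<longrightarrow> M_stationary gradf l A b r X)
       \<and> (convex_on UNIV f \<and> M_stationary gradf l A b r X \<longrightarrow>
            (\<forall>Y\<in>affine_set l A b \<inter> M_Gamma s U V. f X \<le> f Y))"
proof (intro conjI impI ballI; elim conjE)
  assume "local_minimizer f l A b r X" "assumption1 s U V l A"
  then show "M_stationary gradf l A b r X"
    using part1[OF dims deriv cont srank svd] by blast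
next
  fix Y assume "Y \<in> affine_set l A b \<inter> M_Gamma s U V" "convex_on UNIV f" "M_stationary gradf l A b r X"
  then show "f X \<le> f Y" using part2[OF dims deriv srank svd] by blast
qed

end
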